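(* Let $E_1,E_2,E_3,H$ be logically independent events with $H\ne\emptyset$, and let $\mathscr C_i=E_i|H$ ($i=1,2,3$), $\mathscr C_{ij}=(E_i|H)\wedge(E_j|H)$ ($1\le i<j\le3$), $\mathscr C_{123}=(E_1|H)\wedge(E_2|H)\wedge(E_3|H)$. Then an assessment $(x_1,x_2,x_3,x_{12},x_{13},x_{23},x_{123})$ on $\{\mathscr C_1,\mathscr C_2,\mathscr C_3,\mathscr C_{12},\mathscr C_{13},\mathscr C_{23},\mathscr C_{123}\}$ is coherent if and only if $(x_1,x_2,x_3)\in[0,1]^3$; $\max\{x_1+x_2-1,x_{13}+x_{23}-x_3,0\}\le x_{12}\le\min\{x_1,x_2\}$; $\max\{x_1+x_3-1,x_{12}+x_{23}-x_2,0\}\le x_{13}\le\min\{x_1,x_3\}$; $\max\{x_2+x_3-1,x_{12}+x_{13}-x_1,0\}\le x_{23}\le\min\{x_2,x_3\}$; $1-x_1-x_2-x_3+x_{12}+x_{13}+x_{23}\ge0$; $x_{123}\ge\max\{0,x_{12}+x_{13}-x_1,x_{12}+x_{23}-x_2,x_{13}+x_{23}-x_3\}$; $x_{123}\le\min\{x_{12},x_{13},x_{23},1-x_1-x_2-x_3+x_{12}+x_{13}+x_{23}\}$.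
   Context: Events are identified with their indicators; $\bar E$ is the negation of $E$. For $H\ne\emptyset$ the conditional event $E|H$ is true if $EH$ is true, false if $\bar EH$ is true, void if $\bar H$ is true; with $P(E|H)=x$ it is identified with the random quantity $EH+x\bar H$, and a conditional random quantity $X|H$ with prevision $\mu$ with $XH+\mu\bar H$. Coherence (de Finetti): an assessment $(\mu_1,\dots,\mu_m)$ on $\{X_1|H_1,\dots,X_m|H_m\}$ is coherent iff for all real stakes $s_i$ the gain $G=\sum_is_iH_i(X_i-\mu_i)$, restricted to $H_1\vee\dots\vee H_m$, satisfies $\min G\le0\le\max G$. Logical independence: all conjunctions of the listed events or their negations are nonempty. Conjunction of conditional events $E_i|H_i$, $i\in\{1,\dots,n\}$: given prevision values $x_S$ for the sub-conjunctions $\mathscr C_S=\bigwedge_{i\in S}(E_i|H_i)$, $\emptyset\ne S\subsetneq\{1,\dots,n\}$ (with $x_{\{i\}}=P(E_i|H_i)$), $\mathscr C_{1\cdots n}$ equals $1$ if all $E_iH_i$ are true, $0$ if some $\bar E_iH_i$ is true, $x_S$ if $(\bigwedge_{i\in S}\bar H_i)(\bigwedge_{i\notin S}E_iH_i)$ is true, and its own prevision $x_{1\cdots n}$ if all $H_i$ are false. Here all $H_i=H$, $x_i=\mathbb P(\mathscr C_i)$, $x_{ij}=\mathbb P(\mathscr C_{ij})$, $x_{123}=\mathbb P(\mathscr C_{123})$. *)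

theory Defs
  imports Complex_Main
begin

definition ind :: "'w set \<Rightarrow> 'w \<Rightarrow> real" where
  "ind A w = (if w \<in> A then 1 else 0)"

definition logically_independent :: "'w set list \<Rightarrow> bool" where
  "logically_independent L \<longleftrightarrow>
     (\<forall>bs::bool list. length bs = length L \<longrightarrow>
        (\<Inter>i<length L. if bs ! i then L ! i else - (L ! i)) \<noteq> {})"

text \<open>Conjunction of the conditional events E i | H i, i in S, given prevision values
  x T for all nonempty T \<subseteq> S (x S being its own prevision):
  1 if all E i H i true, 0 if some (not E i) H i true, otherwise x of the set of
  indices whose conditioning event is false.\<close>
definition conj_ce :: "(nat \<Rightarrow> 'w set) \<Rightarrow> (nat \<Rightarrow> 'w set) \<Rightarrow> nat set \<Rightarrow> (nat set \<Rightarrow> real)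
                       \<Rightarrow> 'w \<Rightarrow> real" where
  "conj_ce E H S x w =
     (if \<forall>i\<in>S. w \<in> E i \<inter> H i then 1
      else if \<exists>i\<in>S. w \<in> H i - E i then 0
      else x {i\<in>S. w \<notin> H i})"

text \<open>de Finetti coherence of an assessment on conditional random quantities X_k | H_k
  with previsions mu_k, given as triples (X_k, H_k, mu_k): for all real stakes, the
  gain restricted to the union of the conditioning events takes a value \<le> 0 and
  a value \<ge> 0 (min G \<le> 0 \<le> max G).\<close>
definition coherent :: "(('w \<Rightarrow> real) \<times> 'w set \<times> real) list \<Rightarrow> bool" where
  "coherent F \<longleftrightarrow>
     (\<forall>s::nat \<Rightarrow> real.
        let G = (\<lambda>w. \<Sum>k<length F. s k * ind (fst (snd (F ! k))) w
                                     * (fst (F ! k) w - snd (snd (F ! k))));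
            D = (\<Union>k<length F. fst (snd (F ! k)))
        in (\<exists>w\<in>D. G w \<le> 0) \<and> (\<exists>w\<in>D. 0 \<le> G w))"

definition asg3 :: "real \<Rightarrow> real \<Rightarrow> real \<Rightarrow> real \<Rightarrow> real \<Rightarrow> real \<Rightarrow> real \<Rightarrow> nat set \<Rightarrow> real" where
  "asg3 x1 x2 x3 x12 x13 x23 x123 S =
     (if S = {1} then x1 else if S = {2} then x2 else if S = {3} then x3
      else if S = {1,2} then x12 else if S = {1,3} then x13 else if S = {2,3} then x23
      else if S = {1,2,3} then x123 else 0)"

end

theory Submission imports Defs begin
definition b2r :: "bool \<Rightarrow> real" where "b2r a = (if a then 1 else 0)"

lemma li_wit: assumes "logically_independent [A,B,C,D]"
  shows "\<exists>w. (w\<in>A \<longleftrightarrow> a) \<and> (w\<in>B\<longleftrightarrow>b) \<and> (w\<in>C\<longleftrightarrow>c) \<and> w\<in>D"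
proof -
  have "length [a,b,c,True] = length [A,B,C,D]" by simp
  with assms have "(\<Inter>i<length [A,B,C,D]. if [a,b,c,True] ! i then [A,B,C,D] ! i else - ([A,B,C,D] ! i)) \<noteq> {}"
    unfolding logically_independent_def by blast
  then obtain w where "w \<in> (\<Inter>i<length [A,B,C,D]. if [a,b,c,True] ! i then [A,B,C,D] ! i else - ([A,B,C,D] ! i))" by blast
  then have h: "\<And>i. i < 4 \<Longrightarrow> w \<in> (if [a,b,c,True] ! i then [A,B,C,D] ! i else - ([A,B,C,D] ! i))" by simp
  have "w \<in> (if a then A else - A)" using h[of 0] by (simp split: if_splits)
  moreover have "w \<in> (if b then B else - B)" using h[of 1] by (simp split: if_splits)
  moreover have "w \<in> (if c then C else - C)" using h[of 2] by (simp split: if_splits)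
  moreover have "w \<in> D" using h[of 3] by (simp split: if_splits)
  ultimately show ?thesis by (auto split: if_splits)
qed

lemma ce_H: "w \<in> H \<Longrightarrow> conj_ce E (\<lambda>_. H) S x w = b2r (\<forall>i\<in>S. w \<in> E i)"
  by (auto simp: conj_ce_def b2r_def)

lemma red:
  fixes E :: "nat \<Rightarrow> 'w set" and H :: "'w set"
  fixes f :: "nat set \<Rightarrow> real" and x1 x2 x3 x12 x13 x23 x123 :: real
  shows "coherent
     [ (conj_ce E (\<lambda>_. H) {1} f, H, x1),
       (conj_ce E (\<lambda>_. H) {2} f, H, x2),
       (conj_ce E (\<lambda>_. H) {3} f, H, x3),
       (conj_ce E (\<lambda>_. H) {1,2} f, H, x12),
       (conj_ce E (\<lambda>_. H) {1,3} f, H, x13),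
       (conj_ce E (\<lambda>_. H) {2,3} f, H, x23),
       (conj_ce E (\<lambda>_. H) {1,2,3} f, H, x123) ]
   \<longleftrightarrow> (\<forall>s::nat\<Rightarrow>real. let g = (\<lambda>a b c. s 0 * (b2r a - x1) + s 1 * (b2r b - x2) + s 2 * (b2r c - x3)
         + s 3 * (b2r (a\<and>b) - x12) + s 4 * (b2r (a\<and>c) - x13) + s 5 * (b2r (b\<and>c) - x23)
         + s 6 * (b2r (a\<and>b\<and>c) - x123)) in
      (\<exists>w\<in>H. g (w\<in>E 1) (w\<in>E 2) (w\<in>E 3) \<le> 0) \<and> (\<exists>w\<in>H. 0 \<le> g (w\<in>E 1) (w\<in>E 2) (w\<in>E 3)))"
proof -
  have U: "(\<Union>k<length [(0::nat),1,2,3,4,5,6]. H) = H" by (simp add: eval_nat_numeral lessThan_Suc)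
  show ?thesis
    unfolding coherent_def Let_def
    apply (simp add: eval_nat_numeral lessThan_Suc)
    apply (intro all_cong1 conj_cong bex_cong refl)
    apply (simp_all add: ce_H ind_def algebra_simps)
    done
qed
definition gfun :: "(nat\<Rightarrow>real) \<Rightarrow> real \<Rightarrow> real \<Rightarrow> real \<Rightarrow> real \<Rightarrow> real \<Rightarrow> real \<Rightarrow> real \<Rightarrow> bool \<Rightarrow> bool \<Rightarrow> bool \<Rightarrow> real" where
 "gfun s x1 x2 x3 x12 x13 x23 x123 a b c = s 0 * (b2r a - x1) + s 1 * (b2r b - x2) + s 2 * (b2r c - x3)
         + s 3 * (b2r (a\<and>b) - x12) + s 4 * (b2r (a\<and>c) - x13) + s 5 * (b2r (b\<and>c) - x23)
         + s 6 * (b2r (a\<and>b\<and>c) - x123)"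

lemma pure_bwd:
  fixes x1 x2 x3 x12 x13 x23 x123 :: real
  assumes "0 \<le> x123" "0 \<le> x12 - x123" "0 \<le> x13 - x123" "0 \<le> x23 - x123"
   "0 \<le> x1 - x12 - x13 + x123" "0 \<le> x2 - x12 - x23 + x123" "0 \<le> x3 - x13 - x23 + x123"
   "0 \<le> 1 - x1 - x2 - x3 + x12 + x13 + x23 - x123"
  shows "\<exists>a b c. gfun s x1 x2 x3 x12 x13 x23 x123 a b c \<le> 0"
proof (rule ccontr)
  assume "\<not> ?thesis"
  then have pos: "\<And>a b c. 0 < gfun s x1 x2 x3 x12 x13 x23 x123 a b c" by (meson not_le)
  let ?g = "gfun s x1 x2 x3 x12 x13 x23 x123"
  have id: "x123 * ?g True True True + (x12 - x123) * ?g True True False + (x13 - x123) * ?g True False True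
     + (x23 - x123) * ?g False True True + (x1 - x12 - x13 + x123) * ?g True False False
     + (x2 - x12 - x23 + x123) * ?g False True False + (x3 - x13 - x23 + x123) * ?g False False True
     + (1 - x1 - x2 - x3 + x12 + x13 + x23 - x123) * ?g False False False = 0"
    by (simp add: gfun_def b2r_def algebra_simps)
  have n1: "0 \<le> x123 * ?g True True True" using assms(1) pos[of True True True] by simp
  have n2: "0 \<le> (x12 - x123) * ?g True True False" using assms(2) pos[of True True False] by simp
  have n3: "0 \<le> (x13 - x123) * ?g True False True" using assms(3) pos[of True False True] by simp
  have n4: "0 \<le> (x23 - x123) * ?g False True True" using assms(4) pos[of False True True] by simp
  have n5: "0 \<le> (x1 - x12 - x13 + x123) * ?g True False False" using assms(5) pos[of True False False] by simp
  have n6: "0 \<le> (x2 - x12 - x23 + x123) * ?g False True False" using assms(6) pos[of False True False] by simp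
  have n7: "0 \<le> (x3 - x13 - x23 + x123) * ?g False False True" using assms(7) pos[of False False True] by simp
  have n8: "0 \<le> (1 - x1 - x2 - x3 + x12 + x13 + x23 - x123) * ?g False False False" using assms(8) pos[of False False False] by simp
  have z1: "x123 = 0" using n1 n2 n3 n4 n5 n6 n7 n8 id pos[of True True True]
    by (smt (verit) mult_eq_0_iff)
  have z2: "x12 - x123 = 0" using n1 n2 n3 n4 n5 n6 n7 n8 id pos[of True True False]
    by (smt (verit) mult_eq_0_iff)
  have z3: "x13 - x123 = 0" using n1 n2 n3 n4 n5 n6 n7 n8 id pos[of True False True]
    by (smt (verit) mult_eq_0_iff)
  have z4: "x23 - x123 = 0" using n1 n2 n3 n4 n5 n6 n7 n8 id pos[of False True True]
    by (smt (verit) mult_eq_0_iff)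
  have z5: "x1 - x12 - x13 + x123 = 0" using n1 n2 n3 n4 n5 n6 n7 n8 id pos[of True False False]
    by (smt (verit) mult_eq_0_iff)
  have z6: "x2 - x12 - x23 + x123 = 0" using n1 n2 n3 n4 n5 n6 n7 n8 id pos[of False True False]
    by (smt (verit) mult_eq_0_iff)
  have z7: "x3 - x13 - x23 + x123 = 0" using n1 n2 n3 n4 n5 n6 n7 n8 id pos[of False False True]
    by (smt (verit) mult_eq_0_iff)
  have z8: "1 - x1 - x2 - x3 + x12 + x13 + x23 - x123 = 0" using n1 n2 n3 n4 n5 n6 n7 n8 id pos[of False False False]
    by (smt (verit) mult_eq_0_iff)
  show False using z1 z2 z3 z4 z5 z6 z7 z8 by linarith
qed

lemma gfun_neg: "gfun (\<lambda>k. - s k) x1 x2 x3 x12 x13 x23 x123 a b c = - gfun s x1 x2 x3 x12 x13 x23 x123 a b c"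
  by (simp add: gfun_def algebra_simps)

lemma pure_fwd1:
  assumes "\<exists>a b c. gfun s x1 x2 x3 x12 x13 x23 x123 a b c \<le> 0"
  and "\<And>a b c. gfun s x1 x2 x3 x12 x13 x23 x123 a b c = b2r (P a b c) - q"
  shows "0 \<le> q"
proof -
  from assms(1) obtain a b c where "gfun s x1 x2 x3 x12 x13 x23 x123 a b c \<le> 0" by blast
  with assms(2)[of a b c] show ?thesis by (simp add: b2r_def split: if_splits)
qed

lemma pure:
  fixes x1 x2 x3 x12 x13 x23 x123 :: real
  shows "(\<forall>s. (\<exists>a b c. gfun s x1 x2 x3 x12 x13 x23 x123 a b c \<le> 0) \<and> (\<exists>a b c. 0 \<le> gfun s x1 x2 x3 x12 x13 x23 x123 a b c))
   \<longleftrightarrow>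
   (x1 \<in> {0..1} \<and> x2 \<in> {0..1} \<and> x3 \<in> {0..1} \<and>
    max (max (x1 + x2 - 1) (x13 + x23 - x3)) 0 \<le> x12 \<and> x12 \<le> min x1 x2 \<and>
    max (max (x1 + x3 - 1) (x12 + x23 - x2)) 0 \<le> x13 \<and> x13 \<le> min x1 x3 \<and>
    max (max (x2 + x3 - 1) (x12 + x13 - x1)) 0 \<le> x23 \<and> x23 \<le> min x2 x3 \<and>
    1 - x1 - x2 - x3 + x12 + x13 + x23 \<ge> 0 \<and>
    x123 \<ge> max (max 0 (x12 + x13 - x1)) (max (x12 + x23 - x2) (x13 + x23 - x3)) \<and>
    x123 \<le> min (min x12 x13) (min x23 (1 - x1 - x2 - x3 + x12 + x13 + x23)))"
   (is "?L \<longleftrightarrow> ?R")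
proof
  assume L: ?L
  let ?g = "gfun"
  have c: "\<And>s. \<exists>a b c. gfun s x1 x2 x3 x12 x13 x23 x123 a b c \<le> 0" using L by blast
  have p1: "0 \<le> x123"
    by (rule pure_fwd1[OF c[of "\<lambda>k. [0,0,0,0,0,0,1] ! k"], where P="\<lambda>a b c. a \<and> b \<and> c"])
       (simp add: gfun_def b2r_def)
  have p2: "0 \<le> x12 - x123"
    by (rule pure_fwd1[OF c[of "\<lambda>k. [0,0,0,1,0,0,-1] ! k"], where P="\<lambda>a b c. a \<and> b \<and> \<not> c"])
       (simp add: gfun_def b2r_def)
  have p3: "0 \<le> x13 - x123"
    by (rule pure_fwd1[OF c[of "\<lambda>k. [0,0,0,0,1,0,-1] ! k"], where P="\<lambda>a b c. a \<and> \<not> b \<and> c"])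
       (simp add: gfun_def b2r_def)
  have p4: "0 \<le> x23 - x123"
    by (rule pure_fwd1[OF c[of "\<lambda>k. [0,0,0,0,0,1,-1] ! k"], where P="\<lambda>a b c. \<not> a \<and> b \<and> c"])
       (simp add: gfun_def b2r_def)
  have p5: "0 \<le> x1 - x12 - x13 + x123"
    by (rule pure_fwd1[OF c[of "\<lambda>k. [1,0,0,-1,-1,0,1] ! k"], where P="\<lambda>a b c. a \<and> \<not> b \<and> \<not> c"])
       (simp add: gfun_def b2r_def)
  have p6: "0 \<le> x2 - x12 - x23 + x123"
    by (rule pure_fwd1[OF c[of "\<lambda>k. [0,1,0,-1,0,-1,1] ! k"], where P="\<lambda>a b c. \<not> a \<and> b \<and> \<not> c"])
       (simp add: gfun_def b2r_def)
  have p7: "0 \<le> x3 - x13 - x23 + x123"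
    by (rule pure_fwd1[OF c[of "\<lambda>k. [0,0,1,0,-1,-1,1] ! k"], where P="\<lambda>a b c. \<not> a \<and> \<not> b \<and> c"])
       (simp add: gfun_def b2r_def)
  have p8: "0 \<le> 1 - x1 - x2 - x3 + x12 + x13 + x23 - x123"
    by (rule pure_fwd1[OF c[of "\<lambda>k. [-1,-1,-1,1,1,1,-1] ! k"], where P="\<lambda>a b c. \<not> a \<and> \<not> b \<and> \<not> c"])
       (simp add: gfun_def b2r_def)
  show ?R unfolding atLeastAtMost_iff max.bounded_iff min.bounded_iff using p1 p2 p3 p4 p5 p6 p7 p8 by (intro conjI; linarith)
next
  assume R: ?R
  have q: "\<And>s. \<exists>a b c. gfun s x1 x2 x3 x12 x13 x23 x123 a b c \<le> 0"
    by (rule pure_bwd) (use R in \<open>simp_all only: atLeastAtMost_iff max.bounded_iff min.bounded_iff\<close>; linarith)+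
  show ?L
  proof
    fix s
    from q[of "\<lambda>k. - s k"] have "\<exists>a b c. 0 \<le> gfun s x1 x2 x3 x12 x13 x23 x123 a b c"
      by (simp add: gfun_neg)
    with q[of s] show "(\<exists>a b c. gfun s x1 x2 x3 x12 x13 x23 x123 a b c \<le> 0) \<and> (\<exists>a b c. 0 \<le> gfun s x1 x2 x3 x12 x13 x23 x123 a b c)" by blast
  qed
qed
lemma ex_iff: assumes li: "logically_independent [E 1, E 2, E 3, H]"
  shows "(\<exists>w\<in>H. P (w\<in>E 1) (w\<in>E 2) (w\<in>E 3)) \<longleftrightarrow> (\<exists>a b c. P a b c)"
proof
  assume "\<exists>a b c. P a b c"
  then obtain a b c where p: "P a b c" by blast
  obtain w where w: "(w\<in>E 1 \<longleftrightarrow> a)" "(w\<in>E 2\<longleftrightarrow>b)" "(w\<in>E 3\<longleftrightarrow>c)" "w\<in>H"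
    using li_wit[OF li] by blast
  have "P (w\<in>E 1) (w\<in>E 2) (w\<in>E 3)" using p unfolding w(1-3) .
  then show "\<exists>w\<in>H. P (w\<in>E 1) (w\<in>E 2) (w\<in>E 3)" using w(4) by blast
next
  assume "\<exists>w\<in>H. P (w\<in>E 1) (w\<in>E 2) (w\<in>E 3)"
  then show "\<exists>a b c. P a b c" by blast
qed

lemma ex_iff_le: assumes li: "logically_independent [E 1, E 2, E 3, H]"
  shows "(\<exists>w\<in>H. (g (w\<in>E 1) (w\<in>E 2) (w\<in>E 3) :: real) \<le> 0) \<longleftrightarrow> (\<exists>a b c. g a b c \<le> 0)"
  by (rule ex_iff[OF li])

lemma ex_iff_ge: assumes li: "logically_independent [E 1, E 2, E 3, H]"
  shows "(\<exists>w\<in>H. 0 \<le> (g (w\<in>E 1) (w\<in>E 2) (w\<in>E 3) :: real)) \<longleftrightarrow> (\<exists>a b c. 0 \<le> g a b c)"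
  by (rule ex_iff[OF li])

theorem theorem21:
  fixes E :: "nat \<Rightarrow> 'w set" and H :: "'w set"
    and x1 x2 x3 x12 x13 x23 x123 :: real
  assumes "H \<noteq> {}"
    and "logically_independent [E 1, E 2, E 3, H]"
  shows "coherent
     [ (conj_ce E (\<lambda>_. H) {1} (asg3 x1 x2 x3 x12 x13 x23 x123), H, x1),
       (conj_ce E (\<lambda>_. H) {2} (asg3 x1 x2 x3 x12 x13 x23 x123), H, x2),
       (conj_ce E (\<lambda>_. H) {3} (asg3 x1 x2 x3 x12 x13 x23 x123), H, x3),
       (conj_ce E (\<lambda>_. H) {1,2} (asg3 x1 x2 x3 x12 x13 x23 x123), H, x12),
       (conj_ce E (\<lambda>_. H) {1,3} (asg3 x1 x2 x3 x12 x13 x23 x123), H, x13),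
       (conj_ce E (\<lambda>_. H) {2,3} (asg3 x1 x2 x3 x12 x13 x23 x123), H, x23),
       (conj_ce E (\<lambda>_. H) {1,2,3} (asg3 x1 x2 x3 x12 x13 x23 x123), H, x123) ]
   \<longleftrightarrow>
   (x1 \<in> {0..1} \<and> x2 \<in> {0..1} \<and> x3 \<in> {0..1} \<and>
    max (max (x1 + x2 - 1) (x13 + x23 - x3)) 0 \<le> x12 \<and> x12 \<le> min x1 x2 \<and>
    max (max (x1 + x3 - 1) (x12 + x23 - x2)) 0 \<le> x13 \<and> x13 \<le> min x1 x3 \<and>
    max (max (x2 + x3 - 1) (x12 + x13 - x1)) 0 \<le> x23 \<and> x23 \<le> min x2 x3 \<and>
    1 - x1 - x2 - x3 + x12 + x13 + x23 \<ge> 0 \<and>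
    x123 \<ge> max (max 0 (x12 + x13 - x1)) (max (x12 + x23 - x2) (x13 + x23 - x3)) \<and>
    x123 \<le> min (min x12 x13) (min x23 (1 - x1 - x2 - x3 + x12 + x13 + x23)))"
proof -
  let ?f = "asg3 x1 x2 x3 x12 x13 x23 x123"
  have "coherent
     [ (conj_ce E (\<lambda>_. H) {1} ?f, H, x1),
       (conj_ce E (\<lambda>_. H) {2} ?f, H, x2),
       (conj_ce E (\<lambda>_. H) {3} ?f, H, x3),
       (conj_ce E (\<lambda>_. H) {1,2} ?f, H, x12),
       (conj_ce E (\<lambda>_. H) {1,3} ?f, H, x13),
       (conj_ce E (\<lambda>_. H) {2,3} ?f, H, x23),
       (conj_ce E (\<lambda>_. H) {1,2,3} ?f, H, x123) ]
    \<longleftrightarrow> (\<forall>s. (\<exists>w\<in>H. gfun s x1 x2 x3 x12 x13 x23 x123 (w\<in>E 1) (w\<in>E 2) (w\<in>E 3) \<le> 0)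
          \<and> (\<exists>w\<in>H. 0 \<le> gfun s x1 x2 x3 x12 x13 x23 x123 (w\<in>E 1) (w\<in>E 2) (w\<in>E 3)))"
    unfolding red[of E H ?f x1 x2 x3 x12 x13 x23 x123] by (simp add: gfun_def Let_def)
  also have "\<dots> \<longleftrightarrow> (\<forall>s. (\<exists>a b c. gfun s x1 x2 x3 x12 x13 x23 x123 a b c \<le> 0)
          \<and> (\<exists>a b c. 0 \<le> gfun s x1 x2 x3 x12 x13 x23 x123 a b c))"
    apply (intro all_cong1 conj_cong)
     apply (rule ex_iff_le[OF assms(2)])
    apply (rule ex_iff_ge[OF assms(2)])
    done
  finally show ?thesis by (simp only: pure)
qed

end
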